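(* Let $K$ be a commutative unital ring, $k,n\in\mathbb{N}^*$, $\bar a,\bar b=(b_1,\dots,b_k),\bar c=(c_1,\dots,c_k)\in K^k$, $d_i:=b_ic_i$, $\bar d:=(d_1,\dots,d_k)$, and let $p(x):=\det(xI_n-T^k_n(\bar a,\bar b,\bar c))\in K[x]$. If $n\le k$ then $p(x)=\alpha^{\bar x-\bar a,-\bar d}(n,k)$. If $n>k$, write $n=mk+r$ with $0\le r<k$, $d:=d_1\cdots d_k$, $U^x(i):=U_i(\pi^{\bar x-\bar a,-\bar d}(k,k),d)\in K[x]$; then \[p(x)=U^x(m)\alpha^{\bar x-\bar a,-\bar d}(k+r,k)-dU^x(m-1)\alpha^{\bar x-\bar a,-\bar d}(r,k)=U^x(m+1)\alpha^{\bar x-\bar a,-\bar d}(r,k)+d_kd_1\cdots d_rU^x(m)\alpha^{\bar x-\bar a,-\bar d}_{r+1}(k-r-2,k),\] and in particular if $r=k-1$ then $p(x)=U^x(m+1)\alpha^{\bar x-\bar a,-\bar d}(k-1,k)$. Moreover, if $b_{i_1}=\dots=b_{i_q}=0$ or $c_{i_1}=\dots=c_{i_q}=0$ for some $q\ge1$, $1\le i_1<\dots<i_q\le k$ with $n>i_1$, then with $i_{q+1}:=i_1+k$, $i_0:=i_q$, $(r',p_0):=(r+k,0)$ if $r\le i_1$ and otherwise $r':=r$ and $p_0\in\mathbb{N}^*$ with $i_{p_0}<r\le i_{p_0+1}$, $m_j:=1$ if $j<p_0$ and $0$ if $j\ge p_0$ (for $1\le j<q$), $m_q:=0$ if $p_0>0$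 or $m=0$ and $m_q:=-1$ if $p_0=0$, we have \[p(x)=\alpha^{\bar x-\bar a,-\bar d}(i_1,k)\prod_{j=1}^q\big(\alpha^{\bar x-\bar a,-\bar d}_{i_j}(i_{j+1}-i_j,k)\big)^{m+m_j}\alpha^{\bar x-\bar a,-\bar d}_{i_{p_0}}(r'-i_{p_0},k).\]
   Context: Vectors are extended periodically; $\bar x:=(x,\dots,x)\in K[x]^k$ and $\bar x-\bar a$, $-\bar d$ are componentwise. $T^k_n(\bar a,\bar b,\bar c)\in M_n(K)$ is the tridiagonal matrix with diagonal $a_1,\dots,a_n$, superdiagonal $b_1,\dots,b_{n-1}$, subdiagonal $c_1,\dots,c_{n-1}$ (periodic indices). $U_m(x,y):=\sum_{i=0}^{\lfloor (m-1)/2\rfloor}(-1)^i\binom{m-1-i}{i}x^{m-1-2i}y^i$. In $P=\mathbb{Z}[x_1,\dots,x_k,y_1,\dots,y_k]$ indices are periodic; shift $f_s:=f(x_{s+1},\dots,x_{s+k},y_{s+1},\dots,y_{s+k})$; for vectors $\bar u,\bar e$ over a commutative ring $R$, $f^{\bar u,\bar e}\in R$ is the image under $x_i\mapsto u_i$, $y_i\mapsto e_i$, and $f_s^{\bar u,\bar e}:=(f_s)^{\bar u,\bar e}$. Write $[r]=\{1,\dots,r\}$, $S+1=\{s+1:s\in S\}$. For $0\le r\le k$, $\alpha(r,k):=\sum_{S}\prod_{i\in S}y_i\prod_{j\in[r]\setminus(S\cup(S+1))}x_j$ over $S\subseteq\{1,\dots,r-1\}$ with no two consecutive integers; $\alpha(-1,k):=0$;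 for $r>k$, $\alpha(r,k):=x_r\alpha(r-1,k)+y_{r-1}\alpha(r-2,k)$; $\alpha_s(r,k):=(\alpha(r,k))_s$. $\beta(0,k)=\beta(1,k):=0$; for $2\le r\le k+1$, $\beta(r,k):=\sum_S y_k\prod_{i\in S}y_i\prod_{j\in\{2,\dots,r-1\}\setminus(S\cup(S+1))}x_j$ over $S\subseteq\{2,\dots,r-2\}$ with no two consecutive integers. $\pi(r,k):=\alpha(r,k)+\beta(r,k)$. *)

theory Defs
  imports "Jordan_Normal_Form.Determinant" "HOL-Computational_Algebra.Polynomial"
begin

text \<open>Periodic extension of a vector given on indices 1..k: index i (i \<ge> 0) is read as
  ((i - 1) mod k) + 1, computed as ((i + k - 1) mod k) + 1 (so index 0 means index k).\<close>
definition per :: "nat \<Rightarrow> (nat \<Rightarrow> 'a) \<Rightarrow> nat \<Rightarrow> 'a" where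
  "per k f i = f ((i + k - 1) mod k + 1)"

text \<open>The tridiagonal n x n matrix T^k_n(a,b,c) (0-based matrix indices, periodic vector indices):
  diagonal a_1..a_n, superdiagonal b_1..b_(n-1), subdiagonal c_1..c_(n-1).\<close>
definition tridiag :: "nat \<Rightarrow> nat \<Rightarrow> (nat \<Rightarrow> 'a::zero) \<Rightarrow> (nat \<Rightarrow> 'a) \<Rightarrow> (nat \<Rightarrow> 'a) \<Rightarrow> 'a mat" where
  "tridiag k n a b c = mat n n (\<lambda>(i, j).
     if i = j then per k a (i + 1)
     else if j = i + 1 then per k b (i + 1)
     else if i = j + 1 then per k c (j + 1)
     else 0)"

definition chebU :: "nat \<Rightarrow> 'a::comm_ring_1 \<Rightarrow> 'a \<Rightarrow> 'a" where
  "chebU m x y = (if m = 0 then 0 else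
     (\<Sum>i = 0..(m - 1) div 2. (-1) ^ i * of_nat ((m - 1 - i) choose i) * x ^ (m - 1 - 2 * i) * y ^ i))"

text \<open>Evaluations f^{u,e} of the polynomials alpha, beta, pi of P, where u, e are the
  (periodically extended) images of x_i, y_i.  Sets S with no two consecutive integers.\<close>
definition nocons :: "nat set \<Rightarrow> bool" where
  "nocons S \<longleftrightarrow> (\<forall>i\<in>S. Suc i \<notin> S)"

definition alpha_le :: "(nat \<Rightarrow> 'a::comm_ring_1) \<Rightarrow> (nat \<Rightarrow> 'a) \<Rightarrow> nat \<Rightarrow> 'a" where
  "alpha_le u e r = (\<Sum>S\<in>{S. S \<subseteq> {1..<r} \<and> nocons S}.
      (\<Prod>i\<in>S. e i) * (\<Prod>j\<in>{1..r} - (S \<union> Suc ` S). u j))"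

fun alpha_nat :: "nat \<Rightarrow> (nat \<Rightarrow> 'a::comm_ring_1) \<Rightarrow> (nat \<Rightarrow> 'a) \<Rightarrow> nat \<Rightarrow> 'a" where
  "alpha_nat k u e 0 = alpha_le u e 0"
| "alpha_nat k u e (Suc 0) = alpha_le u e 1"
| "alpha_nat k u e (Suc (Suc r)) =
     (if Suc (Suc r) \<le> k then alpha_le u e (Suc (Suc r))
      else u (Suc (Suc r)) * alpha_nat k u e (Suc r) + e (Suc r) * alpha_nat k u e r)"

definition alpha :: "nat \<Rightarrow> (nat \<Rightarrow> 'a::comm_ring_1) \<Rightarrow> (nat \<Rightarrow> 'a) \<Rightarrow> int \<Rightarrow> 'a" where
  "alpha k u e r = (if r < 0 then 0 else alpha_nat k u e (nat r))"

definition alpha_s :: "nat \<Rightarrow> nat \<Rightarrow> (nat \<Rightarrow> 'a::comm_ring_1) \<Rightarrow> (nat \<Rightarrow> 'a) \<Rightarrow> int \<Rightarrow> 'a" where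
  "alpha_s s k u e r = alpha k (\<lambda>i. u (s + i)) (\<lambda>i. e (s + i)) r"

text \<open>beta^{u,e}(r,k) (meaningful for r \<le> k+1); beta(0,k) = beta(1,k) = 0.\<close>
definition beta :: "nat \<Rightarrow> (nat \<Rightarrow> 'a::comm_ring_1) \<Rightarrow> (nat \<Rightarrow> 'a) \<Rightarrow> nat \<Rightarrow> 'a" where
  "beta k u e r = (if r < 2 then 0 else
     (\<Sum>S\<in>{S. S \<subseteq> {2..r - 2} \<and> nocons S}.
        e k * (\<Prod>i\<in>S. e i) * (\<Prod>j\<in>{2..r - 1} - (S \<union> Suc ` S). u j)))"

definition pi_ev :: "nat \<Rightarrow> (nat \<Rightarrow> 'a::comm_ring_1) \<Rightarrow> (nat \<Rightarrow> 'a) \<Rightarrow> nat \<Rightarrow> 'a" where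
  "pi_ev k u e r = alpha k u e (int r) + beta k u e r"

text \<open>The evaluation vectors xbar - abar and -dbar over K[x] (periodically extended).\<close>
definition xa :: "nat \<Rightarrow> (nat \<Rightarrow> 'a::comm_ring_1) \<Rightarrow> nat \<Rightarrow> 'a poly" where
  "xa k a i = [: - per k a i, 1 :]"

definition md :: "nat \<Rightarrow> (nat \<Rightarrow> 'a::comm_ring_1) \<Rightarrow> (nat \<Rightarrow> 'a) \<Rightarrow> nat \<Rightarrow> 'a poly" where
  "md k b c i = [: - (per k b i * per k c i) :]"

definition charp :: "nat \<Rightarrow> nat \<Rightarrow> (nat \<Rightarrow> 'a::comm_ring_1) \<Rightarrow> (nat \<Rightarrow> 'a) \<Rightarrow> (nat \<Rightarrow> 'a) \<Rightarrow> 'a poly" where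
  "charp k n a b c = det ([:0, 1:] \<cdot>\<^sub>m 1\<^sub>m n - map_mat (\<lambda>t. [:t:]) (tridiag k n a b c))"

end

theory Submission
  imports Defs
begin


definition trim :: "nat \<Rightarrow> (nat\<Rightarrow>'a::comm_ring_1) \<Rightarrow> (nat\<Rightarrow>'a) \<Rightarrow> (nat\<Rightarrow>'a) \<Rightarrow> 'a mat" where
"trim n p q s = mat n n (\<lambda>(i,j). if i = j then p i else if j = Suc i then q i else if i = Suc j then s j else 0)"

lemma det_trim: "det (trim (Suc (Suc n)) p q s) = p (Suc n) * det (trim (Suc n) p q s) - q n * s n * det (trim n p q s)"
proof -
  let ?A = "trim (Suc (Suc n)) p q s"
  have A: "?A \<in> carrier_mat (Suc (Suc n)) (Suc (Suc n))" by (simp add: trim_def)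
  have "det ?A = (\<Sum>j<Suc (Suc n). ?A $$ (Suc n,j) * cofactor ?A (Suc n) j)"
    by (rule laplace_expansion_row[OF A], simp)
  also have "\<dots> = (\<Sum>j<n. ?A $$ (Suc n,j) * cofactor ?A (Suc n) j) + ?A $$ (Suc n,n) * cofactor ?A (Suc n) n
     + ?A $$ (Suc n,Suc n) * cofactor ?A (Suc n) (Suc n)" by simp
  also have "(\<Sum>j<n. ?A $$ (Suc n,j) * cofactor ?A (Suc n) j) = 0"
    by (rule sum.neutral, auto simp: trim_def)
  also have "mat_delete ?A (Suc n) (Suc n) = trim (Suc n) p q s"
    by (rule eq_matI, auto simp: trim_def mat_delete_def)
  hence "cofactor ?A (Suc n) (Suc n) = det (trim (Suc n) p q s)" by (simp add: cofactor_def)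
  also have "cofactor ?A (Suc n) n = - (q n * det (trim n p q s))"
  proof -
    let ?B = "mat_delete ?A (Suc n) n"
    have B: "?B \<in> carrier_mat (Suc n) (Suc n)" by (simp add: trim_def mat_delete_def)
    have "det ?B = (\<Sum>i<Suc n. ?B $$ (i,n) * cofactor ?B i n)"
      by (rule laplace_expansion_column[OF B], simp)
    also have "\<dots> = (\<Sum>i<n. ?B $$ (i,n) * cofactor ?B i n) + ?B $$ (n,n) * cofactor ?B n n" by simp
    also have "(\<Sum>i<n. ?B $$ (i,n) * cofactor ?B i n) = 0"
      by (rule sum.neutral, auto simp: trim_def mat_delete_def)
    also have "mat_delete ?B n n = trim n p q s"
      by (rule eq_matI, auto simp: trim_def mat_delete_def)
    hence "cofactor ?B n n = det (trim n p q s)" by (simp add: cofactor_def)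
    also have "?B $$ (n,n) = q n" by (simp add: trim_def mat_delete_def)
    finally have "det ?B = q n * det (trim n p q s)" by simp
    thus ?thesis by (simp add: cofactor_def)
  qed
  also have "?A $$ (Suc n, n) = s n" by (simp add: trim_def)
  also have "?A $$ (Suc n, Suc n) = p (Suc n)" by (simp add: trim_def)
  finally show ?thesis by (simp add: algebra_simps)
qed

lemma det_trim0: "det (trim 0 p q s) = 1"
  by (simp add: trim_def det_def)

lemma det_trim1: "det (trim (Suc 0) p q s) = p 0"
proof -
  let ?A = "trim (Suc 0) p q s"
  have A: "?A \<in> carrier_mat 1 1" by (simp add: trim_def)
  have "det ?A = (\<Sum>j<1. ?A $$ (0,j) * cofactor ?A 0 j)"
    by (rule laplace_expansion_row[OF A], simp)
  also have "mat_delete ?A 0 0 = trim 0 p q s" by (rule eq_matI, auto simp: trim_def mat_delete_def)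
  then show ?thesis using calculation by (simp add: cofactor_def det_trim0 trim_def)
qed



fun G :: "(nat \<Rightarrow> 'a::comm_ring_1) \<Rightarrow> (nat \<Rightarrow> 'a) \<Rightarrow> nat \<Rightarrow> 'a" where
  "G u e 0 = 0"
| "G u e (Suc 0) = 1"
| "G u e (Suc (Suc l)) = u (Suc l) * G u e (Suc l) + e l * G u e l"

definition NC :: "nat \<Rightarrow> nat set set" where "NC r = {S. S \<subseteq> {1..<r} \<and> nocons S}"

definition tt :: "(nat \<Rightarrow> 'a::comm_ring_1) \<Rightarrow> (nat \<Rightarrow> 'a) \<Rightarrow> nat \<Rightarrow> nat set \<Rightarrow> 'a" where
  "tt u e r S = (\<Prod>i\<in>S. e i) * (\<Prod>j\<in>{1..r} - (S \<union> Suc ` S). u j)"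

lemma alpha_le_tt: "alpha_le u e r = sum (tt u e r) (NC r)"
  unfolding alpha_le_def NC_def tt_def by simp

lemma NC_finite: "finite (NC r)"
  by (rule finite_subset[of _ "Pow {1..<r}"], auto simp: NC_def)

lemma NC_split: "NC (Suc (Suc r)) = NC (Suc r) \<union> insert (Suc r) ` NC r"
proof
  show "NC (Suc (Suc r)) \<subseteq> NC (Suc r) \<union> insert (Suc r) ` NC r"
  proof
    fix S assume S: "S \<in> NC (Suc (Suc r))"
    show "S \<in> NC (Suc r) \<union> insert (Suc r) ` NC r"
    proof (cases "Suc r \<in> S")
      case False
      hence "S \<in> NC (Suc r)" using S by (auto simp: NC_def less_Suc_eq)
      thus ?thesis by simp
    next
      case True
      have "r \<notin> S" using True S by (auto simp: NC_def nocons_def)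
      have "S - {Suc r} \<subseteq> {1..<r}"
      proof
        fix x assume x: "x \<in> S - {Suc r}"
        hence "x \<in> {1..<Suc (Suc r)}" "x \<noteq> Suc r" "x \<noteq> r" using S \<open>r \<notin> S\<close> by (auto simp: NC_def)
        thus "x \<in> {1..<r}" by auto
      qed
      hence "S - {Suc r} \<in> NC r" using S by (auto simp: NC_def nocons_def)
      moreover have "S = insert (Suc r) (S - {Suc r})" using True by auto
      ultimately show ?thesis by blast
    qed
  qed
next
  show "NC (Suc r) \<union> insert (Suc r) ` NC r \<subseteq> NC (Suc (Suc r))"
    by (auto simp: NC_def nocons_def subset_iff)
qed

lemma tt_a: assumes "S \<in> NC (Suc r)"
  shows "tt u e (Suc (Suc r)) S = u (Suc (Suc r)) * tt u e (Suc r) S"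
proof -
  have "{1..Suc (Suc r)} - (S \<union> Suc ` S) = insert (Suc (Suc r)) ({1..Suc r} - (S \<union> Suc ` S))"
    using assms by (auto simp: NC_def subset_iff)
  moreover have "Suc (Suc r) \<notin> {1..Suc r} - (S \<union> Suc ` S)" by auto
  ultimately show ?thesis unfolding tt_def by (simp add: algebra_simps)
qed

lemma tt_b: assumes "S \<in> NC r"
  shows "tt u e (Suc (Suc r)) (insert (Suc r) S) = e (Suc r) * tt u e r S"
proof -
  have fS: "finite S" using assms by (auto simp: NC_def intro: finite_subset)
  have nS: "Suc r \<notin> S" using assms by (auto simp: NC_def)
  have "{1..Suc (Suc r)} - (insert (Suc r) S \<union> Suc ` insert (Suc r) S) = {1..r} - (S \<union> Suc ` S)"
    using assms by (auto simp: NC_def subset_iff)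
  thus ?thesis unfolding tt_def using fS nS by (simp add: algebra_simps)
qed

lemma alpha_le_rec: "alpha_le u e (Suc (Suc r)) = u (Suc (Suc r)) * alpha_le u e (Suc r) + e (Suc r) * alpha_le u e r"
proof -
  have disj: "NC (Suc r) \<inter> insert (Suc r) ` NC r = {}" by (auto simp: NC_def)
  have inj: "inj_on (insert (Suc r)) (NC r)"
  proof (rule inj_onI)
    fix S T assume "S \<in> NC r" "T \<in> NC r" "insert (Suc r) S = insert (Suc r) T"
    moreover have "Suc r \<notin> S" "Suc r \<notin> T" using calculation by (auto simp: NC_def)
    ultimately show "S = T" by (simp add: insert_ident)
  qed
  have "alpha_le u e (Suc (Suc r)) = sum (tt u e (Suc (Suc r))) (NC (Suc r)) + sum (tt u e (Suc (Suc r))) (insert (Suc r) ` NC r)"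
    unfolding alpha_le_tt NC_split by (rule sum.union_disjoint[OF NC_finite _ disj], simp add: NC_finite)
  also have "sum (tt u e (Suc (Suc r))) (NC (Suc r)) = u (Suc (Suc r)) * alpha_le u e (Suc r)"
    unfolding alpha_le_tt sum_distrib_left by (rule sum.cong, auto simp: tt_a)
  also have "sum (tt u e (Suc (Suc r))) (insert (Suc r) ` NC r) = e (Suc r) * alpha_le u e r"
    unfolding alpha_le_tt sum_distrib_left sum.reindex[OF inj] by (rule sum.cong, auto simp: tt_b)
  finally show ?thesis .
qed

lemma alpha_le_0: "alpha_le u e 0 = 1"
proof -
  have "{S. S \<subseteq> {1..<0::nat} \<and> nocons S} = {{}}" by (auto simp: nocons_def)
  thus ?thesis by (simp add: alpha_le_def)
qed

lemma alpha_le_1: "alpha_le u e (Suc 0) = u 1"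
proof -
  have "{S. S \<subseteq> {1..<Suc 0} \<and> nocons S} = {{}}" by (auto simp: nocons_def)
  thus ?thesis by (simp add: alpha_le_def)
qed

lemma alpha_le_G: "alpha_le u e r = G u e (Suc r)"
proof (induction r rule: nat_less_induct)
  case (1 n)
  show ?case
  proof (cases n)
    case 0 thus ?thesis by (simp add: alpha_le_0)
  next
    case (Suc m) note m = this
    show ?thesis
    proof (cases m)
      case 0 thus ?thesis using m by (simp add: alpha_le_1)
    next
      case (Suc l)
      thus ?thesis using m 1 by (simp add: alpha_le_rec)
    qed
  qed
qed

lemma alpha_nat_G: "alpha_nat k u e r = G u e (Suc r)"
  by (induction k u e r rule: alpha_nat.induct) (auto simp: alpha_le_G)

lemma alpha_G: "alpha k u e r = G u e (nat (r + 1))"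
  by (auto simp: alpha_def alpha_nat_G Suc_nat_eq_nat_zadd1 add.commute)

lemma alpha_s_G: "alpha_s s k u e r = G (\<lambda>i. u (s + i)) (\<lambda>i. e (s + i)) (nat (r + 1))"
  by (simp add: alpha_s_def alpha_G)

lemma beta_G: assumes "2 \<le> r"
  shows "beta k u e r = e k * G (\<lambda>i. u (1 + i)) (\<lambda>i. e (1 + i)) (r - 1)"
proof -
  let ?u = "\<lambda>i. u (1 + i)" and ?e = "\<lambda>i. e (1 + i)"
  have "G ?u ?e (r - 1) = alpha_le ?u ?e (r - 2)" using assms
    by (simp add: alpha_le_G Suc_diff_Suc numeral_2_eq_2)
  also have "\<dots> = (\<Sum>T\<in>NC (r - 2). tt ?u ?e (r - 2) T)" by (rule alpha_le_tt)
  also have "\<dots> = (\<Sum>T\<in>NC (r - 2). (\<Prod>i\<in>Suc ` T. e i) * (\<Prod>j\<in>{2..r - 1} - (Suc ` T \<union> Suc ` Suc ` T). u j))"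
  proof (rule sum.cong[OF refl])
    fix T assume T: "T \<in> NC (r - 2)"
    have "{2..r - 1} - (Suc ` T \<union> Suc ` Suc ` T) = Suc ` ({1..r - 2} - (T \<union> Suc ` T))"
    proof -
      have "{2..r - 1} = Suc ` {1..r-2}" using assms
        by (auto simp: image_iff intro!: bexI[of _ "_ - 1"])
      thus ?thesis by (simp only: image_set_diff[OF inj_Suc] image_Un)
    qed
    thus "tt ?u ?e (r - 2) T = (\<Prod>i\<in>Suc ` T. e i) * (\<Prod>j\<in>{2..r - 1} - (Suc ` T \<union> Suc ` Suc ` T). u j)"
      unfolding tt_def by (simp add: prod.reindex)
  qed
  also have "\<dots> = (\<Sum>S\<in>(\<lambda>T. Suc ` T) ` NC (r - 2). (\<Prod>i\<in>S. e i) * (\<Prod>j\<in>{2..r - 1} - (S \<union> Suc ` S). u j))"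
    by (rule sum.reindex[symmetric, unfolded comp_def], rule inj_onI, auto simp: inj_image_eq_iff)
  also have "(\<lambda>T. Suc ` T) ` NC (r - 2) = {S. S \<subseteq> {2..r - 2} \<and> nocons S}"
  proof
    show "(\<lambda>T. Suc ` T) ` NC (r - 2) \<subseteq> {S. S \<subseteq> {2..r - 2} \<and> nocons S}"
      by (auto simp: NC_def nocons_def subset_iff)
  next
    show "{S. S \<subseteq> {2..r - 2} \<and> nocons S} \<subseteq> (\<lambda>T. Suc ` T) ` NC (r - 2)"
    proof
      fix S assume S: "S \<in> {S. S \<subseteq> {2..r - 2} \<and> nocons S}"
      have "\<forall>i\<in>S. Suc (i - 1) = i" using S by auto
      hence "(\<lambda>i. Suc (i - 1)) ` S = S" by simp
      hence "S = Suc ` ((\<lambda>i. i - 1) ` S)" by (simp add: image_image)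
      moreover have "(\<lambda>i. i - 1) ` S \<in> NC (r - 2)" using S
      proof -
        have "(\<lambda>i. i - 1) ` S \<subseteq> {1..<r - 2}" using S by (force simp: subset_iff)
        moreover have "nocons ((\<lambda>i. i - 1) ` S)"
        proof (unfold nocons_def, rule ballI)
          fix j assume "j \<in> (\<lambda>i. i - 1) ` S"
          then obtain i where i: "i \<in> S" "j = i - 1" by auto
          show "Suc j \<notin> (\<lambda>i. i - 1) ` S"
          proof
            assume "Suc j \<in> (\<lambda>i. i - 1) ` S"
            then obtain i' where "i' \<in> S" "Suc j = i' - 1" by auto
            moreover have "i \<ge> 2" "i' \<ge> 2" using S i calculation by auto
            ultimately have "i' = Suc i" using i by auto
            thus False using S i \<open>i' \<in> S\<close> by (auto simp: nocons_def)
          qed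
        qed
        ultimately show ?thesis by (simp add: NC_def)
      qed
      ultimately show "S \<in> (\<lambda>T. Suc ` T) ` NC (r - 2)" by blast
    qed
  qed
  finally show ?thesis using assms by (simp add: beta_def sum_distrib_left mult.assoc)
qed



lemma G_split: "G u e (s + l + 1) = G u e (s + 1) * G (\<lambda>i. u (s + i)) (\<lambda>i. e (s + i)) (l + 1)
   + e s * G u e s * G (\<lambda>i. u (Suc s + i)) (\<lambda>i. e (Suc s + i)) l"
proof (induction l rule: nat_less_induct)
  case (1 l)
  show ?case
  proof (cases l)
    case 0 thus ?thesis by simp
  next
    case (Suc l1) note l1 = this
    show ?thesis
    proof (cases l1)
      case 0 thus ?thesis using l1 by (simp add: algebra_simps)
    next
      case (Suc l2)
      have IH1: "G u e (s + l2 + 1) = G u e (s + 1) * G (\<lambda>i. u (s + i)) (\<lambda>i. e (s + i)) (l2 + 1)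
         + e s * G u e s * G (\<lambda>i. u (Suc s + i)) (\<lambda>i. e (Suc s + i)) l2"
        by (rule 1[rule_format]) (simp add: l1 Suc)
      have IH2: "G u e (s + Suc l2 + 1) = G u e (s + 1) * G (\<lambda>i. u (s + i)) (\<lambda>i. e (s + i)) (Suc l2 + 1)
         + e s * G u e s * G (\<lambda>i. u (Suc s + i)) (\<lambda>i. e (Suc s + i)) (Suc l2)"
        by (rule 1[rule_format]) (simp add: l1 Suc)
      have "G u e (s + l + 1) = u (s + l2 + 2) * G u e (s + Suc l2 + 1) + e (s + l2 + 1) * G u e (s + l2 + 1)"
        using l1 Suc by (simp add: numeral_2_eq_2)
      also have "G (\<lambda>i. u (s + i)) (\<lambda>i. e (s + i)) (l + 1) = u (s + l2 + 2) * G (\<lambda>i. u (s + i)) (\<lambda>i. e (s + i)) (Suc l2 + 1)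
           + e (s + l2 + 1) * G (\<lambda>i. u (s + i)) (\<lambda>i. e (s + i)) (l2 + 1)"
        using l1 Suc by (simp add: numeral_2_eq_2)
      moreover have "G (\<lambda>i. u (Suc s + i)) (\<lambda>i. e (Suc s + i)) l = u (s + l2 + 2) * G (\<lambda>i. u (Suc s + i)) (\<lambda>i. e (Suc s + i)) (Suc l2)
           + e (s + l2 + 1) * G (\<lambda>i. u (Suc s + i)) (\<lambda>i. e (Suc s + i)) l2"
        using l1 Suc by (simp add: numeral_2_eq_2)
      ultimately show ?thesis unfolding IH1 IH2 by (simp add: algebra_simps)
    qed
  qed
qed

lemma G_cas: "G u e (l + 2) * G (\<lambda>i. u (1 + i)) (\<lambda>i. e (1 + i)) l
   - G (\<lambda>i. u (1 + i)) (\<lambda>i. e (1 + i)) (l + 1) * G u e (l + 1) = - (\<Prod>i\<in>{1..l}. - e i)"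
proof (induction l)
  case 0 thus ?case by simp
next
  case (Suc l)
  let ?G1 = "G (\<lambda>i. u (1 + i)) (\<lambda>i. e (1 + i))"
  have a: "G u e (Suc l + 2) = u (Suc (Suc l)) * G u e (l + 2) + e (Suc l) * G u e (l + 1)"
    by (simp add: numeral_2_eq_2)
  have b: "?G1 (Suc l + 1) = u (Suc (Suc l)) * ?G1 (l + 1) + e (Suc l) * ?G1 l"
    by simp
  have c: "(\<Prod>i\<in>{1..Suc l}. - e i) = (\<Prod>i\<in>{1..l}. - e i) * (- e (Suc l))"
    by (simp add: prod.nat_ivl_Suc')
  have d: "?G1 (Suc l) = ?G1 (l + 1)" "G u e (Suc l + 1) = G u e (l + 2)" by simp_all
  show ?case unfolding a b c d using Suc.IH[symmetric] by (simp add: algebra_simps)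
qed

lemma G_cross: assumes "r \<le> L"
  shows "G (\<lambda>i. u (1 + i)) (\<lambda>i. e (1 + i)) r * G u e (L + 1) - G u e (r + 1) * G (\<lambda>i. u (1 + i)) (\<lambda>i. e (1 + i)) L
    = - (\<Prod>i\<in>{1..r}. - e i) * G (\<lambda>i. u (Suc r + i)) (\<lambda>i. e (Suc r + i)) (L - r)"
proof (cases r)
  case 0 thus ?thesis by simp
next
  case (Suc r')
  let ?G1 = "G (\<lambda>i. u (1 + i)) (\<lambda>i. e (1 + i))"
  let ?Gr = "G (\<lambda>i. u (r + i)) (\<lambda>i. e (r + i))"
  let ?Gs = "G (\<lambda>i. u (Suc r + i)) (\<lambda>i. e (Suc r + i))"
  have s1: "G u e (L + 1) = G u e (r + 1) * ?Gr (L - r + 1) + e r * G u e r * ?Gs (L - r)"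
    using G_split[of u e r "L - r"] assms by simp
  have s2: "?G1 L = ?G1 r * ?Gr (L - r + 1) + e r * ?G1 r' * ?Gs (L - r)"
    using G_split[of "\<lambda>i. u (1 + i)" "\<lambda>i. e (1 + i)" r' "L - r"] assms Suc by simp
  have cas: "G u e (r' + 2) * ?G1 r' - ?G1 (r' + 1) * G u e (r' + 1) = - (\<Prod>i\<in>{1..r'}. - e i)"
    by (rule G_cas)
  have c: "(\<Prod>i\<in>{1..r}. - e i) = (\<Prod>i\<in>{1..r'}. - e i) * (- e r)"
    using Suc by (simp add: prod.nat_ivl_Suc')
  have d: "G u e (r' + 2) = G u e (r + 1)" "?G1 (r' + 1) = ?G1 r" "G u e (r' + 1) = G u e r"
    using Suc by simp_all
  have h: "G u e r * ?G1 r - (\<Prod>i\<in>{1..r'}. - e i) - G u e (r + 1) * ?G1 r' = 0"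
    using cas[unfolded d] by (simp add: algebra_simps)
  have "?G1 r * (G u e (r + 1) * ?Gr (L - r + 1) + e r * G u e r * ?Gs (L - r)) -
        G u e (r + 1) * (?G1 r * ?Gr (L - r + 1) + e r * ?G1 r' * ?Gs (L - r)) -
        (- ((\<Prod>i\<in>{1..r'}. - e i) * (- e r)) * ?Gs (L - r))
      = e r * ?Gs (L - r) * (G u e r * ?G1 r - (\<Prod>i\<in>{1..r'}. - e i) - G u e (r + 1) * ?G1 r')"
    by (simp add: algebra_simps)
  also have "\<dots> = 0" using h by simp
  finally show ?thesis unfolding s1 s2 c by simp
qed

lemma per_mod: assumes "k \<ge> 1" shows "per k f i = per k f (i mod k)"
proof -
  have "i + k - 1 = i + (k - 1)" "i mod k + k - 1 = i mod k + (k - 1)" using assms by simp_all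
  hence "(i + k - 1) mod k = (i mod k + k - 1) mod k"
    by (simp add: mod_add_left_eq)
  thus ?thesis by (simp add: per_def)
qed

lemma per_periodic: assumes "k \<ge> 1" shows "per k f (i + t * k) = per k f i"
  using per_mod[OF assms, of f] by (metis mod_mult_self1)

lemma per_in: assumes "1 \<le> i" "i \<le> k" shows "per k f i = f i"
proof (cases "i = k")
  case True
  have "(k + k - 1) mod k = ((k - 1) + k) mod k" using assms by (intro arg_cong[where f="\<lambda>t. t mod k"]) simp
  also have "\<dots> = (k - 1) mod k" by (rule mod_add_self2)
  also have "\<dots> = k - 1" using assms by simp
  finally have "(k + k - 1) mod k = k - 1" .
  thus ?thesis using assms True by (simp add: per_def)
next
  case False
  have "(i + k - 1) mod k = ((i - 1) + k) mod k" using assms by (intro arg_cong[where f="\<lambda>t. t mod k"]) simp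
  also have "\<dots> = (i - 1) mod k" by (rule mod_add_self2)
  also have "\<dots> = i - 1" using assms by simp
  finally show ?thesis using assms by (simp add: per_def)
qed

lemma per_0: assumes "k \<ge> 1" shows "per k f 0 = f k"
  using assms by (simp add: per_def)

lemma charp_G: "charp k n a b c = G (xa k a) (md k b c) (Suc n)"
proof -
  let ?p = "\<lambda>i. xa k a (Suc i)" and ?q = "\<lambda>i. - [:per k b (Suc i):]" and ?s = "\<lambda>j. - [:per k c (Suc j):]"
  have M: "[:0, 1:] \<cdot>\<^sub>m 1\<^sub>m n - map_mat (\<lambda>t. [:t:]) (tridiag k n a b c) = trim n ?p ?q ?s"
    by (rule eq_matI, auto simp: trim_def tridiag_def xa_def)
  have "det (trim n ?p ?q ?s) = G (xa k a) (md k b c) (Suc n)"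
  proof (induction n rule: nat_less_induct)
    case (1 n)
    show ?case
    proof (cases n)
      case 0 thus ?thesis by (simp add: det_trim0)
    next
      case (Suc n1) note n1 = this
      show ?thesis
      proof (cases n1)
        case 0 thus ?thesis using n1 by (simp add: det_trim1)
      next
        case (Suc n2)
        thus ?thesis using 1 n1 by (simp add: det_trim md_def algebra_simps)
      qed
    qed
  qed
  thus ?thesis using M by (simp add: charp_def)
qed

definition TT :: "nat \<Rightarrow> 'a::comm_ring_1 \<Rightarrow> 'a \<Rightarrow> nat \<Rightarrow> 'a" where
  "TT m X Y i = (-1)^i * of_nat ((m - i) choose i) * X^(m - 2*i) * Y^i"

lemma chebU_S: "chebU (Suc m) X Y = (\<Sum>i\<le>m. TT m X Y i)"
proof -
  have "chebU (Suc m) X Y = (\<Sum>i = 0..m div 2. TT m X Y i)" by (simp add: chebU_def TT_def)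
  also have "\<dots> = (\<Sum>i\<le>m. TT m X Y i)"
  proof (rule sum.mono_neutral_left)
    show "\<forall>i\<in>{..m} - {0..m div 2}. TT m X Y i = 0"
    proof
      fix i assume "i \<in> {..m} - {0..m div 2}"
      hence "m - i < i" by auto
      thus "TT m X Y i = 0" by (simp add: TT_def binomial_eq_0)
    qed
  qed auto
  finally show ?thesis .
qed

lemma TT_step: "TT (Suc (Suc m)) X Y (Suc j) = X * TT (Suc m) X Y (Suc j) - Y * TT m X Y j"
proof (cases "j \<le> m")
  case True
  have ch: "(Suc (Suc m) - Suc j) choose Suc j = ((m - j) choose j) + ((m - j) choose Suc j)"
    using True by (simp add: Suc_diff_le)
  show ?thesis
  proof (cases "Suc j \<le> m - j")
    case True
    have e1: "m - 2 * j = Suc (m - Suc (2 * j))" "Suc m - 2 * Suc j = m - Suc (2 * j)"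
      "Suc (Suc m) - 2 * Suc j = Suc (m - Suc (2 * j))" using True by simp_all
    show ?thesis unfolding TT_def ch e1 by (simp add: algebra_simps)
  next
    case False
    hence lt: "m - j < Suc j" by simp
    have z: "of_nat ((m - j) choose Suc j) = (0::'a)" using lt by (simp add: binomial_eq_0)
    have z2: "Suc m - Suc j = m - j" by simp
    have e3: "Suc (Suc m) - 2 * Suc j = m - 2 * j" by simp
    show ?thesis unfolding TT_def ch z2 e3 of_nat_add z by (simp add: algebra_simps)
  qed
next
  case False
  thus ?thesis by (simp add: TT_def binomial_eq_0)
qed

lemma chebU_rec: "chebU (Suc (Suc m)) X Y = X * chebU (Suc m) X Y - Y * chebU m X Y"
proof (cases m)
  case 0 thus ?thesis by (simp add: chebU_def)
next
  case (Suc m1)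
  have "chebU (Suc (Suc m)) X Y = TT (Suc m) X Y 0 + (\<Sum>j\<le>m. TT (Suc m) X Y (Suc j))"
    unfolding chebU_S by (rule sum.atMost_Suc_shift)
  also have "(\<Sum>j\<le>m. TT (Suc m) X Y (Suc j)) = X * (\<Sum>j\<le>m. TT m X Y (Suc j)) - Y * (\<Sum>j\<le>m. TT m1 X Y j)"
    unfolding Suc TT_step by (simp only: sum_distrib_left sum_subtractf)
  also have "(\<Sum>j\<le>m. TT m X Y (Suc j)) = chebU (Suc m) X Y - TT m X Y 0"
  proof -
    have "(\<Sum>j\<le>m. TT m X Y (Suc j)) = (\<Sum>j\<le>m1. TT m X Y (Suc j)) + TT m X Y (Suc m)"
      using Suc by simp
    also have "TT m X Y (Suc m) = 0" by (simp add: TT_def)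
    also have "chebU (Suc m) X Y = TT m X Y 0 + (\<Sum>j\<le>m1. TT m X Y (Suc j))"
      unfolding chebU_S Suc by (rule sum.atMost_Suc_shift)
    ultimately show ?thesis by simp
  qed
  also have "(\<Sum>j\<le>m. TT m1 X Y j) = chebU m X Y"
    unfolding Suc chebU_S by (simp add: TT_def binomial_eq_0)
  finally show ?thesis by (simp add: TT_def Suc algebra_simps)
qed



lemma prod_const_poly: "(\<Prod>i\<in>A. [:f i:]) = [:\<Prod>i\<in>A. f i:]"
  by (induction A rule: infinite_finite_induct) (auto simp: mult_to_poly mult.commute)

lemma periodic_mult: fixes k t :: nat assumes "\<And>i. f (i + k) = f i" shows "f (i + t * k) = f i"
proof (induction t)
  case (Suc t)
  have "f (i + Suc t * k) = f ((i + t * k) + k)" by (simp add: algebra_simps)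
  thus ?case using assms Suc by simp
qed simp

lemma xa_per: "k \<ge> 1 \<Longrightarrow> xa k a (i + k) = xa k a i"
  using per_periodic[of k a i 1] by (simp add: xa_def)

lemma md_per: "k \<ge> 1 \<Longrightarrow> md k b c (i + k) = md k b c i"
  using per_periodic[of k b i 1] per_periodic[of k c i 1] by (simp add: md_def)

context
  fixes u e :: "nat \<Rightarrow> 'a::comm_ring_1" and k :: nat
  assumes k: "k \<ge> 1" and pu: "\<And>i. u (i + k) = u i" and pe: "\<And>i. e (i + k) = e i"
begin

lemma pu': "u (t * k + i) = u i" using periodic_mult[of u k i t] pu by (simp add: add.commute)
lemma pe': "e (t * k + i) = e i" using periodic_mult[of e k i t] pe by (simp add: add.commute)

lemma D1: "G u e (t * k + l + 1) = G u e (t * k + 1) * G u e (l + 1)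
    + e k * G u e (t * k) * G (\<lambda>i. u (1 + i)) (\<lambda>i. e (1 + i)) l"
proof -
  have a: "(\<lambda>i. u (t * k + i)) = u" "(\<lambda>i. e (t * k + i)) = e" by (simp_all add: pu' pe')
  have b: "(\<lambda>i. u (Suc (t * k) + i)) = (\<lambda>i. u (1 + i))" "(\<lambda>i. e (Suc (t * k) + i)) = (\<lambda>i. e (1 + i))"
    using pu'[of t "1 + _"] pe'[of t "1 + _"] by (auto simp: add.assoc)
  have c: "e (t * k) = e k" using pe'[of t 0] pe[of 0] by simp
  show ?thesis using G_split[of u e "t * k" l] unfolding a b c by simp
qed

abbreviation "G1 \<equiv> G (\<lambda>i. u (1 + i)) (\<lambda>i. e (1 + i))"
abbreviation "V0 t \<equiv> G u e (t * k + 1)"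
abbreviation "V1 t \<equiv> G u e (t * k)"
definition "PP = G u e (k + 1) + e k * G1 (k - 1)"
definition "DD = G u e (k + 1) * (e k * G1 (k - 1)) - e k * G1 k * G u e k"

lemma V0s: "V0 (Suc t) = V0 t * G u e (k + 1) + e k * V1 t * G1 k"
  using D1[of t k] by (simp add: algebra_simps)
lemma V1s: "V1 (Suc t) = V0 t * G u e k + e k * V1 t * G1 (k - 1)"
  using D1[of t "k - 1"] k by (simp add: algebra_simps)

lemma Yrec: "G u e (Suc (Suc t) * k + r + 1) = PP * G u e (Suc t * k + r + 1) - DD * G u e (t * k + r + 1)"
proof -
  have "G u e (Suc (Suc t) * k + r + 1) = V0 (Suc (Suc t)) * G u e (r + 1) + e k * V1 (Suc (Suc t)) * G1 r"
    using D1[of "Suc (Suc t)" r] by simp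
  moreover have "G u e (Suc t * k + r + 1) = V0 (Suc t) * G u e (r + 1) + e k * V1 (Suc t) * G1 r"
    using D1[of "Suc t" r] by simp
  moreover have "G u e (t * k + r + 1) = V0 t * G u e (r + 1) + e k * V1 t * G1 r"
    using D1[of t r] by simp
  ultimately show ?thesis unfolding V0s V1s PP_def DD_def by (simp add: algebra_simps)
qed

lemma DD_eq: "DD = (\<Prod>i\<in>{1..k}. - e i)"
proof -
  have "G u e (k - 1 + 2) * G1 (k - 1) - G1 (k - 1 + 1) * G u e (k - 1 + 1) = - (\<Prod>i\<in>{1..k-1}. - e i)"
    by (rule G_cas)
  moreover have "k - 1 + 2 = k + 1" "k - 1 + 1 = k" using k by simp_all
  moreover have "(\<Prod>i\<in>{1..k}. - e i) = (\<Prod>i\<in>{1..k-1}. - e i) * (- e k)"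
    using k prod.nat_ivl_Suc'[of 1 "k - 1" "\<lambda>i. - e i"] by simp
  ultimately have cas: "G u e (k + 1) * G1 (k - 1) - G1 k * G u e k = - (\<Prod>i\<in>{1..k-1}. - e i)"
    and pr: "(\<Prod>i\<in>{1..k}. - e i) = (\<Prod>i\<in>{1..k-1}. - e i) * (- e k)" by simp_all
  have "DD = e k * (G u e (k + 1) * G1 (k - 1) - G1 k * G u e k)" by (simp add: DD_def algebra_simps)
  also have "\<dots> = (\<Prod>i\<in>{1..k}. - e i)" unfolding cas pr by (simp add: algebra_simps)
  finally show ?thesis .
qed

lemma cheb_main: "G u e (Suc m * k + r + 1) = chebU (Suc m) PP DD * G u e (k + r + 1)
   - DD * chebU m PP DD * G u e (r + 1)"
proof (induction m rule: nat_less_induct)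
  case (1 m)
  show ?case
  proof (cases m)
    case 0 thus ?thesis by (simp add: chebU_def)
  next
    case (Suc m1) note m1 = this
    show ?thesis
    proof (cases m1)
      case 0 thus ?thesis using m1 Yrec[of 0 r] by (simp add: chebU_def algebra_simps)
    next
      case (Suc m2)
      have I1: "G u e (Suc m1 * k + r + 1) = chebU (Suc m1) PP DD * G u e (k + r + 1) - DD * chebU m1 PP DD * G u e (r + 1)"
        by (rule 1[rule_format]) (simp add: m1)
      have I2: "G u e (Suc m2 * k + r + 1) = chebU (Suc m2) PP DD * G u e (k + r + 1) - DD * chebU m2 PP DD * G u e (r + 1)"
        by (rule 1[rule_format]) (simp add: m1 Suc)
      have "G u e (Suc m * k + r + 1) = PP * G u e (Suc m1 * k + r + 1) - DD * G u e (Suc m2 * k + r + 1)"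
        using Yrec[of m1 r] m1 Suc by simp
      also have "\<dots> = chebU (Suc m) PP DD * G u e (k + r + 1) - DD * chebU m PP DD * G u e (r + 1)"
        unfolding I1 I2 unfolding m1 Suc chebU_rec by (simp add: algebra_simps)
      finally show ?thesis .
    qed
  qed
qed

lemma second_aux: assumes "r < k"
  shows "G u e (k + r + 1) = PP * G u e (r + 1) + (- e k) * (\<Prod>i\<in>{1..r}. - e i) * G (\<lambda>i. u (Suc r + i)) (\<lambda>i. e (Suc r + i)) (k - 1 - r)"
proof -
  have a: "G u e (k + r + 1) = G u e (k + 1) * G u e (r + 1) + e k * G u e k * G1 r"
    using D1[of 1 r] by simp
  have cr: "G1 r * G u e (k - 1 + 1) - G u e (r + 1) * G1 (k - 1)
    = - (\<Prod>i\<in>{1..r}. - e i) * G (\<lambda>i. u (Suc r + i)) (\<lambda>i. e (Suc r + i)) (k - 1 - r)"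
    by (rule G_cross) (use assms in simp)
  have kk: "k - 1 + 1 = k" using k by simp
  have "G u e (k + r + 1) - (PP * G u e (r + 1) + (- e k) * (\<Prod>i\<in>{1..r}. - e i) * G (\<lambda>i. u (Suc r + i)) (\<lambda>i. e (Suc r + i)) (k - 1 - r))
     = e k * ((G1 r * G u e (k - 1 + 1) - G u e (r + 1) * G1 (k - 1))
     - (- (\<Prod>i\<in>{1..r}. - e i) * G (\<lambda>i. u (Suc r + i)) (\<lambda>i. e (Suc r + i)) (k - 1 - r)))"
    unfolding a PP_def kk by (simp add: algebra_simps)
  also have "\<dots> = 0" unfolding cr by simp
  finally show ?thesis by simp
qed

end



lemma G_split0: assumes "e s = 0"
  shows "G u e (s + l + 1) = G u e (s + 1) * G (\<lambda>i. u (s + i)) (\<lambda>i. e (s + i)) (l + 1)"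
  using G_split[of u e s l] assms by simp

lemma G_chain:
  assumes "\<forall>h\<le>H. e (c h) = 0" "\<forall>h<H. c h \<le> c (Suc h)" "c H \<le> N"
  shows "G u e (N + 1) = G u e (c 0 + 1)
     * (\<Prod>h<H. G (\<lambda>i. u (c h + i)) (\<lambda>i. e (c h + i)) (c (Suc h) - c h + 1))
     * G (\<lambda>i. u (c H + i)) (\<lambda>i. e (c H + i)) (N - c H + 1)"
  using assms
proof (induction H)
  case 0
  have "G u e (c 0 + (N - c 0) + 1) = G u e (c 0 + 1) * G (\<lambda>i. u (c 0 + i)) (\<lambda>i. e (c 0 + i)) (N - c 0 + 1)"
    by (rule G_split0) (use 0 in simp)
  thus ?case using 0 by simp
next
  case (Suc H)
  have le: "c H \<le> c (Suc H)" using Suc.prems by simp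
  have IH: "G u e (N + 1) = G u e (c 0 + 1)
     * (\<Prod>h<H. G (\<lambda>i. u (c h + i)) (\<lambda>i. e (c h + i)) (c (Suc h) - c h + 1))
     * G (\<lambda>i. u (c H + i)) (\<lambda>i. e (c H + i)) (N - c H + 1)"
    using Suc.prems le by (intro Suc.IH) auto
  let ?s = "c (Suc H) - c H"
  have "G (\<lambda>i. u (c H + i)) (\<lambda>i. e (c H + i)) (?s + (N - c (Suc H)) + 1)
     = G (\<lambda>i. u (c H + i)) (\<lambda>i. e (c H + i)) (?s + 1) * G (\<lambda>i. u (c H + (?s + i))) (\<lambda>i. e (c H + (?s + i))) (N - c (Suc H) + 1)"
    by (rule G_split0) (use Suc.prems le in simp)
  moreover have "?s + (N - c (Suc H)) = N - c H" using Suc.prems le by simp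
  moreover have "(\<lambda>i. u (c H + (?s + i))) = (\<lambda>i. u (c (Suc H) + i))" "(\<lambda>i. e (c H + (?s + i))) = (\<lambda>i. e (c (Suc H) + i))"
    using le by (auto simp: add.assoc[symmetric])
  ultimately have "G (\<lambda>i. u (c H + i)) (\<lambda>i. e (c H + i)) (N - c H + 1)
     = G (\<lambda>i. u (c H + i)) (\<lambda>i. e (c H + i)) (?s + 1) * G (\<lambda>i. u (c (Suc H) + i)) (\<lambda>i. e (c (Suc H) + i)) (N - c (Suc H) + 1)"
    by simp
  thus ?case unfolding IH by (simp add: algebra_simps)
qed

lemma prod_mod_aux: fixes s q t :: nat assumes "s \<le> q"
  shows "(\<Prod>h<t * q + s. f (h mod q)) = (\<Prod>h<t * q. f (h mod q)) * (\<Prod>j<s. (f j :: 'a::comm_monoid_mult))"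
  using assms
proof (induction s)
  case (Suc s)
  have "(t * q + s) mod q = s" using Suc.prems by simp
  thus ?case using Suc by (simp add: algebra_simps)
qed simp

lemma prod_mod: fixes s q t :: nat assumes "s \<le> q"
  shows "(\<Prod>h<t * q + s. f (h mod q)) = (\<Prod>j<q. f j) ^ t * (\<Prod>j<s. (f j :: 'a::comm_monoid_mult))"
proof -
  have "(\<Prod>h<t * q. f (h mod q)) = (\<Prod>j<q. f j) ^ t"
  proof (induction t)
    case (Suc t)
    have "(\<Prod>h<Suc t * q. f (h mod q)) = (\<Prod>h<t * q + q. f (h mod q))" by (simp add: algebra_simps)
    also have "\<dots> = (\<Prod>h<t * q. f (h mod q)) * (\<Prod>j<q. f j)" by (rule prod_mod_aux) simp
    finally show ?case using Suc by (simp add: algebra_simps)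
  qed simp
  thus ?thesis by (simp only: prod_mod_aux[OF assms, where t=t and f=f])
qed

lemma regroup: fixes P q M :: nat assumes "1 \<le> P" "P \<le> q"
  shows "(\<Prod>j = 1..q. X j ^ (M + (if j < P then 1 else 0))) = (\<Prod>h<M * q + (P - 1). (X (h mod q + 1) :: 'a::comm_semiring_1))"
proof -
  have "(\<Prod>h<M * q + (P - 1). X (h mod q + 1)) = (\<Prod>j<q. X (j + 1)) ^ M * (\<Prod>j<P - 1. X (j + 1))"
    using prod_mod[where s="P - 1" and q=q and t=M and f="\<lambda>j. X (j + 1)"] assms by simp
  also have "(\<Prod>j<q. X (j + 1)) = (\<Prod>j = 1..q. X j)" using prod.atLeast1_atMost_eq[of X q] by simp
  also have "(\<Prod>j<P - 1. X (j + 1)) = (\<Prod>j = 1..P - 1. X j)" using prod.atLeast1_atMost_eq[of X "P - 1"] by simp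
  also have "(\<Prod>j = 1..P - 1. X j) = (\<Prod>j = 1..q. if j < P then X j else 1)"
  proof -
    have "(\<Prod>j = 1..q. if j < P then X j else 1) = (\<Prod>j \<in> {1..q} \<inter> {j. j < P}. X j)"
      by (simp add: prod.inter_restrict)
    also have "{1..q} \<inter> {j. j < P} = {1..P - 1}" using assms by auto
    finally show ?thesis by simp
  qed
  also have "(\<Prod>j = 1..q. X j) ^ M * (\<Prod>j = 1..q. if j < P then X j else 1)
     = (\<Prod>j = 1..q. X j ^ (M + (if j < P then 1 else 0)))"
  proof -
    have "(\<Prod>j = 1..q. X j ^ (M + (if j < P then 1 else 0))) = (\<Prod>j = 1..q. X j ^ M * (if j < P then X j else 1))"
      by (rule prod.cong) (auto simp: power_add)
    also have "\<dots> = (\<Prod>j = 1..q. X j ^ M) * (\<Prod>j = 1..q. if j < P then X j else 1)" by (rule prod.distrib)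
    finally show ?thesis by (simp add: prod_power_distrib)
  qed
  finally show ?thesis by simp
qed



lemma md_zero_i:
  assumes k: "k \<ge> 1" and j: "1 \<le> j" "j \<le> k" and z: "b j = 0 \<or> c j = 0"
  shows "md k b c (j + t * k) = 0"
proof -
  have "md k b c (j + t * k) = md k b c j"
    by (rule periodic_mult) (rule md_per[OF k])
  also have "\<dots> = 0" using z j by (auto simp: md_def per_in)
  finally show ?thesis .
qed

lemma divmod_aux: fixes s q t :: nat assumes "s < q" shows "(t * q + s) mod q = s" "(t * q + s) div q = t"
  using assms by simp_all

lemma nat_int1: "nat (int x + 1) = Suc x"
  using Suc_nat_eq_nat_zadd1[of "int x"] by simp

lemma nat_int2: "nat (int a + int b + 1) = Suc (a + b)"
  using nat_int1[of "a + b"] by simp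

lemma part3_core:
  fixes a b c :: "nat \<Rightarrow> 'a::comm_ring_1" and k n q m r p0 r' :: nat and i I :: "nat \<Rightarrow> nat" and mj :: "nat \<Rightarrow> int"
  assumes k: "k \<ge> 1" and q1: "q \<ge> 1" and i1: "1 \<le> i 1" and imono: "\<forall>j\<in>{1..<q}. i j < i (Suc j)" and iq: "i q \<le> k"
    and z: "(\<forall>j\<in>{1..q}. b (i j) = 0) \<or> (\<forall>j\<in>{1..q}. c (i j) = 0)" and n: "n > i 1"
    and mdef: "m = n div k" and rdef: "r = n mod k"
    and Idef: "I = (\<lambda>j. if j = 0 then i q else if j = q + 1 then i 1 + k else i j)"
    and p0def: "p0 = (if r \<le> i 1 then 0 else (THE t. 1 \<le> t \<and> t \<le> q \<and> I t < r \<and> r \<le> I (t + 1)))"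
    and r'def: "r' = (if r \<le> i 1 then r + k else r)"
    and mjdef: "mj = (\<lambda>j. if j < q then (if j < p0 then 1 else 0) else (if p0 > 0 \<or> m = 0 then 0 else (-1 :: int)))"
  shows "charp k n a b c = alpha k (xa k a) (md k b c) (int (i 1))
      * (\<Prod>j = 1..q. (alpha_s (I j) k (xa k a) (md k b c) (int (I (j + 1)) - int (I j))) ^ nat (int m + mj j))
      * alpha_s (I p0) k (xa k a) (md k b c) (int r' - int (I p0))"
proof -
  define u where "u = xa k a"
  define e where "e = md k b c"
  have pu: "\<And>x. u (x + k) = u x" using xa_per[OF k] by (simp add: u_def)
  have pe: "\<And>x. e (x + k) = e x" using md_per[OF k] by (simp add: e_def)
  have pu': "\<And>t x. u (x + t * k) = u x" by (rule periodic_mult, rule pu)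
  have n_eq: "n = m * k + r" using mdef rdef by simp
  have rk: "r < k" using rdef k by simp
  have smono: "\<And>j d. 1 \<le> j \<Longrightarrow> j + Suc d \<le> q \<Longrightarrow> i j < i (j + Suc d)"
  proof -
    fix j d assume j: "1 \<le> j" "j + Suc d \<le> q"
    thus "i j < i (j + Suc d)"
    proof (induction d)
      case 0 thus ?case using imono by auto
    next
      case (Suc d)
      hence "i j < i (j + Suc d)" by simp
      also have "i (j + Suc d) < i (Suc (j + Suc d))" using imono Suc.prems by auto
      finally show ?case by simp
    qed
  qed
  have lt: "\<And>j j'. 1 \<le> j \<Longrightarrow> j < j' \<Longrightarrow> j' \<le> q \<Longrightarrow> i j < i j'"
  proof -
    fix j j' :: nat assume h: "1 \<le> j" "j < j'" "j' \<le> q"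
    define d where "d = j' - j - 1"
    have "j' = j + Suc d" using h by (simp add: d_def)
    thus "i j < i j'" using smono[of j d] h by simp
  qed
  have le: "\<And>j j'. 1 \<le> j \<Longrightarrow> j \<le> j' \<Longrightarrow> j' \<le> q \<Longrightarrow> i j \<le> i j'"
  proof -
    fix j j' :: nat assume h: "1 \<le> j" "j \<le> j'" "j' \<le> q"
    show "i j \<le> i j'"
    proof (cases "j = j'")
      case False thus ?thesis using lt[of j j'] h by simp
    qed simp
  qed
  have irange: "\<And>j. 1 \<le> j \<Longrightarrow> j \<le> q \<Longrightarrow> 1 \<le> i j \<and> i j \<le> k"
  proof -
    fix j :: nat assume j: "1 \<le> j" "j \<le> q"
    have "i 1 \<le> i j" "i j \<le> i q" using le[of 1 j] le[of j q] j by simp_all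
    thus "1 \<le> i j \<and> i j \<le> k" using i1 iq by simp
  qed
  have Ii: "\<And>j. 1 \<le> j \<Longrightarrow> j \<le> q \<Longrightarrow> I j = i j" using Idef by auto
  have Iq1: "I (q + 1) = i 1 + k" using Idef by simp
  have I0: "I 0 = i q" using Idef by simp
  have Ilt: "\<And>j. 1 \<le> j \<Longrightarrow> j \<le> q \<Longrightarrow> I j < I (j + 1)"
  proof -
    fix j :: nat assume j: "1 \<le> j" "j \<le> q"
    show "I j < I (j + 1)"
    proof (cases "j = q")
      case True thus ?thesis using Ii[of q] Iq1 irange[of q] q1 i1 by simp
    next
      case False thus ?thesis using Ii[of j] Ii[of "j+1"] lt[of j "j+1"] j by simp
    qed
  qed
  have ez: "\<And>j t. 1 \<le> j \<Longrightarrow> j \<le> q \<Longrightarrow> e (i j + t * k) = 0"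
  proof -
    fix j t :: nat assume j: "1 \<le> j" "j \<le> q"
    have "b (i j) = 0 \<or> c (i j) = 0" using z j by auto
    thus "e (i j + t * k) = 0" unfolding e_def using md_zero_i[OF k] irange[OF j] by blast
  qed
  define cc where "cc h = i (h mod q + 1) + (h div q) * k" for h
  have hm: "\<And>h. 1 \<le> h mod q + 1 \<and> h mod q + 1 \<le> q" using q1
    by (simp add: Suc_leI)
  have ccI: "\<And>h. cc h = I (h mod q + 1) + (h div q) * k" using Ii hm cc_def by simp
  have ccS: "\<And>h. cc (Suc h) = I (h mod q + 2) + (h div q) * k"
  proof -
    fix h
    show "cc (Suc h) = I (h mod q + 2) + (h div q) * k"
    proof (cases "Suc (h mod q) = q")
      case True
      hence "Suc h mod q = 0" "Suc h div q = Suc (h div q)" by (simp_all add: mod_Suc div_Suc)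
      moreover have "I (h mod q + 2) = i 1 + k" using True Idef by simp
      ultimately show ?thesis by (simp add: cc_def)
    next
      case False
      hence "Suc h mod q = Suc (h mod q)" "Suc h div q = h div q" by (simp_all add: mod_Suc div_Suc)
      moreover have "h mod q + 2 \<le> q" using False hm[of h] by simp
      moreover hence "I (h mod q + 2) = i (h mod q + 2)" using Ii by simp
      ultimately show ?thesis by (simp add: cc_def)
    qed
  qed
  have cc_lt: "\<And>h. cc h < cc (Suc h)"
  proof -
    fix h
    have "I (h mod q + 1) < I (h mod q + 1 + 1)" using Ilt hm by blast
    thus "cc h < cc (Suc h)" unfolding ccS[of h] ccI[of h] by simp
  qed
  have cc_e: "\<And>h. e (cc h) = 0" using ez hm cc_def by simp
  define X where "X j = alpha_s (I j) k u e (int (I (j + 1)) - int (I j))" for j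
  have block: "\<And>h. G (\<lambda>x. u (cc h + x)) (\<lambda>x. e (cc h + x)) (cc (Suc h) - cc h + 1) = X (h mod q + 1)"
  proof -
    fix h
    let ?j = "h mod q + 1" and ?t = "h div q"
    have d: "cc (Suc h) - cc h = I (?j + 1) - I ?j" using ccI ccS by simp
    have l: "I ?j < I (?j + 1)" using Ilt hm by simp
    have f1: "(\<lambda>x. u (cc h + x)) = (\<lambda>x. u (I ?j + x))"
      using pu'[of "I ?j + _" ?t] by (auto simp: ccI algebra_simps)
    have f2: "(\<lambda>x. e (cc h + x)) = (\<lambda>x. e (I ?j + x))"
      using periodic_mult[of e k "I ?j + _" ?t, OF pe] by (auto simp: ccI algebra_simps)
    have "nat (int (I (?j + 1)) - int (I ?j) + 1) = I (?j + 1) - I ?j + 1" using l by simp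
    thus "G (\<lambda>x. u (cc h + x)) (\<lambda>x. e (cc h + x)) (cc (Suc h) - cc h + 1) = X ?j"
      unfolding X_def alpha_s_G f1 f2 d by simp
  qed
  obtain M P where MP: "1 \<le> P" "P \<le> q" "I P = I p0" "cc (M * q + (P - 1)) \<le> n"
     "n - cc (M * q + (P - 1)) = nat (int r' - int (I p0))"
     "\<And>j. 1 \<le> j \<Longrightarrow> j \<le> q \<Longrightarrow> nat (int m + mj j) = M + (if j < P then 1 else 0)"
     "I p0 \<le> r'"
  proof (cases "r \<le> i 1")
    case True
    have m1: "m \<ge> 1" using True n n_eq by (cases m) auto
    have p00: "p0 = 0" using True p0def by simp
    have H: "cc ((m - 1) * q + (q - 1)) = i q + (m - 1) * k"
    proof -
      have "q - 1 < q" using q1 by simp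
      note dm = divmod_aux[OF this, of "m - 1"]
      show ?thesis unfolding cc_def dm using q1 by simp
    qed
    have iqr: "i q \<le> r + k" using iq by simp
    show ?thesis
    proof (rule that[of q "m - 1"])
      show "1 \<le> q" "q \<le> q" using q1 by simp_all
      show "I q = I p0" using p00 I0 Ii[of q] q1 by simp
      show "cc ((m - 1) * q + (q - 1)) \<le> n" using H n_eq m1 iq rk
        by (cases m) (auto simp: algebra_simps)
      show "n - cc ((m - 1) * q + (q - 1)) = nat (int r' - int (I p0))"
        using H n_eq m1 iqr p00 I0 r'def True by (cases m) (auto simp: algebra_simps)
      show "I p0 \<le> r'" using p00 I0 iq r'def True by simp
      fix j assume "1 \<le> j" "j \<le> q"
      thus "nat (int m + mj j) = m - 1 + (if j < q then 1 else 0)"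
        using mjdef p00 m1 by auto
    qed
  next
    case False
    let ?Pr = "\<lambda>t. 1 \<le> t \<and> t \<le> q \<and> I t < r \<and> r \<le> I (t + 1)"
    define S where "S = {j \<in> {1..q}. i j < r}"
    have Sf: "finite S" "S \<noteq> {}" using False q1 by (auto simp: S_def intro!: exI[of _ 1])
    define t0 where "t0 = Max S"
    have t0S: "t0 \<in> S" using Sf t0_def Max_in by blast
    have ex: "?Pr t0"
    proof -
      have a: "1 \<le> t0" "t0 \<le> q" "i t0 < r" using t0S by (auto simp: S_def)
      have "r \<le> I (t0 + 1)"
      proof (cases "t0 = q")
        case True thus ?thesis using Iq1 rk by simp
      next
        case False
        hence "I (t0 + 1) = i (t0 + 1)" using Ii a by simp
        moreover have "\<not> i (t0 + 1) < r"
        proof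
          assume "i (t0 + 1) < r"
          hence "t0 + 1 \<in> S" using False a by (auto simp: S_def)
          hence "t0 + 1 \<le> t0" using Sf t0_def by simp
          thus False by simp
        qed
        ultimately show ?thesis by simp
      qed
      thus ?thesis using a Ii by simp
    qed
    have uniq: "\<And>t. ?Pr t \<Longrightarrow> t = t0"
    proof -
      have no: "\<And>t t'. ?Pr t \<Longrightarrow> ?Pr t' \<Longrightarrow> t < t' \<Longrightarrow> False"
      proof -
        fix t t' assume A: "?Pr t" "?Pr t'" "t < t'"
        have "I (t + 1) = i (t + 1)" "I t' = i t'" using A Ii by auto
        moreover have "i (t + 1) \<le> i t'" using le[of "t+1" t'] A by simp
        ultimately show False using A by simp
      qed
      fix t assume Pt: "?Pr t"
      show "t = t0"
      proof (rule ccontr)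
        assume "t \<noteq> t0"
        hence "t < t0 \<or> t0 < t" by arith
        thus False using no[OF Pt ex] no[OF ex Pt] by blast
      qed
    qed
    have exs: "1 \<le> t0" "t0 \<le> q" "I t0 < r" "r \<le> I (t0 + 1)" using ex by auto
    have It0: "I t0 = i t0" using Ii exs by simp
    have "\<exists>!t. ?Pr t" using ex uniq by blast
    hence "(THE t. ?Pr t) = t0" by (rule the1_equality[where P="?Pr" and a=t0, OF _ ex])
    hence p0t: "p0 = t0" using p0def False by simp
    have H: "cc (m * q + (t0 - 1)) = i t0 + m * k"
    proof -
      have "t0 - 1 < q" using ex by auto
      note dm = divmod_aux[OF this, of m]
      show ?thesis unfolding cc_def dm using ex by simp
    qed
    show ?thesis
    proof (rule that[of t0 m])
      show "1 \<le> t0" "t0 \<le> q" using exs by simp_all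
      show "I t0 = I p0" using p0t by simp
      show "cc (m * q + (t0 - 1)) \<le> n" using H n_eq exs It0 by simp
      show "n - cc (m * q + (t0 - 1)) = nat (int r' - int (I p0))"
        using H n_eq exs It0 p0t r'def False by simp
      show "I p0 \<le> r'" using p0t exs r'def False by simp
      fix j assume "1 \<le> j" "j \<le> q"
      thus "nat (int m + mj j) = m + (if j < t0 then 1 else 0)"
        using mjdef p0t exs by auto
    qed
  qed
  let ?H = "M * q + (P - 1)"
  have chain: "G u e (n + 1) = G u e (cc 0 + 1)
     * (\<Prod>h<?H. G (\<lambda>x. u (cc h + x)) (\<lambda>x. e (cc h + x)) (cc (Suc h) - cc h + 1))
     * G (\<lambda>x. u (cc ?H + x)) (\<lambda>x. e (cc ?H + x)) (n - cc ?H + 1)"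
    by (rule G_chain) (simp add: cc_e, simp add: less_imp_le[OF cc_lt], rule MP(4))
  have cH: "cc ?H = I P + M * k"
  proof -
    have "P - 1 < q" using MP by simp
    note dm = divmod_aux[OF this, of M]
    show ?thesis unfolding cc_def dm using MP Ii by simp
  qed
  have last: "G (\<lambda>x. u (cc ?H + x)) (\<lambda>x. e (cc ?H + x)) (n - cc ?H + 1) = alpha_s (I p0) k u e (int r' - int (I p0))"
  proof -
    have f1: "(\<lambda>x. u (cc ?H + x)) = (\<lambda>x. u (I p0 + x))"
      unfolding cH
    proof (rule ext)
      fix x show "u (I P + M * k + x) = u (I p0 + x)" using pu'[of "I P + x" M] MP(3) by (simp add: algebra_simps)
    qed
    have f2: "(\<lambda>x. e (cc ?H + x)) = (\<lambda>x. e (I p0 + x))"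
      unfolding cH
    proof (rule ext)
      fix x show "e (I P + M * k + x) = e (I p0 + x)" using periodic_mult[of e k "I P + x" M, OF pe] MP(3) by (simp add: algebra_simps)
    qed
    have "nat (int r' - int (I p0) + 1) = n - cc ?H + 1" using MP(5,7) by simp
    thus ?thesis unfolding alpha_s_G f1 f2 by simp
  qed
  have prod: "(\<Prod>h<?H. G (\<lambda>x. u (cc h + x)) (\<lambda>x. e (cc h + x)) (cc (Suc h) - cc h + 1))
     = (\<Prod>j = 1..q. X j ^ nat (int m + mj j))"
  proof -
    have "(\<Prod>h<?H. G (\<lambda>x. u (cc h + x)) (\<lambda>x. e (cc h + x)) (cc (Suc h) - cc h + 1)) = (\<Prod>h<?H. X (h mod q + 1))"
      using block by simp
    also have "\<dots> = (\<Prod>j = 1..q. X j ^ (M + (if j < P then 1 else 0)))"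
      by (rule regroup[symmetric]) (use MP in auto)
    also have "\<dots> = (\<Prod>j = 1..q. X j ^ nat (int m + mj j))"
      by (rule prod.cong) (use MP in auto)
    finally show ?thesis .
  qed
  have c0: "cc 0 = i 1" by (simp add: cc_def)
  have "charp k n a b c = G u e (n + 1)" by (simp add: charp_G u_def e_def)
  also have "\<dots> = alpha k u e (int (i 1)) * (\<Prod>j = 1..q. X j ^ nat (int m + mj j)) * alpha_s (I p0) k u e (int r' - int (I p0))"
    unfolding chain prod last c0 by (simp add: alpha_G nat_int1)
  finally show ?thesis unfolding X_def u_def e_def .
qed



lemma md_neg: assumes "1 \<le> i" "i \<le> k" shows "- md k b c i = [:b i * c i:]"
  using assms by (simp add: md_def per_in)

lemma part2:
  fixes a b c :: "nat \<Rightarrow> 'a::comm_ring_1" and k n :: nat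
  assumes k: "k \<ge> 1" and nk: "n > k"
  shows "charp k n a b c = chebU (n div k) (pi_ev k (xa k a) (md k b c) k) [:\<Prod>i = 1..k. b i * c i:] * alpha k (xa k a) (md k b c) (int (k + n mod k))
            - [:\<Prod>i = 1..k. b i * c i:] * chebU (n div k - 1) (pi_ev k (xa k a) (md k b c) k) [:\<Prod>i = 1..k. b i * c i:] * alpha k (xa k a) (md k b c) (int (n mod k))"
    "charp k n a b c = chebU (n div k + 1) (pi_ev k (xa k a) (md k b c) k) [:\<Prod>i = 1..k. b i * c i:] * alpha k (xa k a) (md k b c) (int (n mod k))
            + [:b k * c k * (\<Prod>i = 1..n mod k. b i * c i):] * chebU (n div k) (pi_ev k (xa k a) (md k b c) k) [:\<Prod>i = 1..k. b i * c i:]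
              * alpha_s (n mod k + 1) k (xa k a) (md k b c) (int k - int (n mod k) - 2)"
    "n mod k = k - 1 \<Longrightarrow> charp k n a b c = chebU (n div k + 1) (pi_ev k (xa k a) (md k b c) k) [:\<Prod>i = 1..k. b i * c i:] * alpha k (xa k a) (md k b c) (int (k - 1))"
proof -
  define u where "u = xa k a"
  define e where "e = md k b c"
  define m where "m = n div k"
  define r where "r = n mod k"
  define d where "d = (\<Prod>i = 1..k. b i * c i)"
  have pu: "\<And>x. u (x + k) = u x" using xa_per[OF k] by (simp add: u_def)
  have pe: "\<And>x. e (x + k) = e x" using md_per[OF k] by (simp add: e_def)
  have rk: "r < k" using k by (simp add: r_def)
  have m1: "m \<ge> 1" using nk k by (simp add: m_def Suc_le_eq div_greater_zero_iff)
  have n_eq: "n = Suc (m - 1) * k + r" using m1 by (simp add: m_def r_def)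
  have PPd: "PP u e k = G u e (k + 1) + e k * G (\<lambda>i. u (1 + i)) (\<lambda>i. e (1 + i)) (k - 1)"
    by (rule PP_def[where u=u and e=e and k=k, OF k pu pe])
  have PPeq: "pi_ev k u e k = PP u e k"
  proof (cases "k \<ge> 2")
    case True thus ?thesis unfolding PPd by (simp add: pi_ev_def beta_G alpha_G nat_int1)
  next
    case False
    hence "k = 1" using k by simp
    thus ?thesis unfolding PPd by (simp add: pi_ev_def beta_def alpha_G numeral_2_eq_2)
  qed
  have DDeq: "DD u e k = [:d:]"
  proof -
    have "DD u e k = (\<Prod>i\<in>{1..k}. - e i)" by (rule DD_eq[where u=u and e=e and k=k, OF k pu pe])
    also have "\<dots> = (\<Prod>i\<in>{1..k}. [:b i * c i:])" unfolding e_def by (rule prod.cong) (auto simp: md_neg)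
    finally show ?thesis by (simp add: prod_const_poly d_def)
  qed
  let ?U = "\<lambda>j. chebU j (PP u e k) (DD u e k)"
  have p: "charp k n a b c = G u e (n + 1)" by (simp add: charp_G u_def e_def)
  have main: "G u e (n + 1) = ?U m * G u e (k + r + 1) - DD u e k * ?U (m - 1) * G u e (r + 1)"
    using cheb_main[where u=u and e=e and k=k, OF k pu pe, of "m - 1" r] n_eq m1 by simp
  have cr: "(- e k) * (\<Prod>i\<in>{1..r}. - e i) = [:b k * c k * (\<Prod>i = 1..r. b i * c i):]"
  proof -
    have "(\<Prod>i\<in>{1..r}. - e i) = (\<Prod>i\<in>{1..r}. [:b i * c i:])" unfolding e_def
      by (rule prod.cong) (use rk in \<open>auto simp: md_neg\<close>)
    moreover have "- e k = [:b k * c k:]" unfolding e_def using k by (simp add: md_neg)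
    ultimately show ?thesis by (simp add: prod_const_poly mult_to_poly)
  qed
  have sa: "G u e (k + r + 1) = PP u e k * G u e (r + 1) + (- e k) * (\<Prod>i\<in>{1..r}. - e i) * G (\<lambda>i. u (Suc r + i)) (\<lambda>i. e (Suc r + i)) (k - 1 - r)"
    by (rule second_aux[where u=u and e=e and k=k, OF k pu pe rk])
  have rec: "?U (m + 1) = PP u e k * ?U m - DD u e k * ?U (m - 1)"
    using chebU_rec[of "m - 1" "PP u e k" "DD u e k"] m1 by simp
  have as: "alpha_s (r + 1) k u e (int k - int r - 2) = G (\<lambda>i. u (Suc r + i)) (\<lambda>i. e (Suc r + i)) (k - 1 - r)"
  proof -
    have "nat (int k - int r - 2 + 1) = k - 1 - r" using rk by simp
    thus ?thesis by (simp add: alpha_s_G)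
  qed
  have A1: "charp k n a b c = ?U m * alpha k u e (int (k + r)) - [:d:] * ?U (m - 1) * alpha k u e (int r)"
    unfolding p main DDeq[symmetric] by (simp add: alpha_G nat_int1 nat_int2)
  have A2: "charp k n a b c = ?U (m + 1) * alpha k u e (int r)
        + [:b k * c k * (\<Prod>i = 1..r. b i * c i):] * ?U m * alpha_s (r + 1) k u e (int k - int r - 2)"
  proof -
    have "charp k n a b c = ?U m * (PP u e k * G u e (r + 1) + (- e k) * (\<Prod>i\<in>{1..r}. - e i) * G (\<lambda>i. u (Suc r + i)) (\<lambda>i. e (Suc r + i)) (k - 1 - r))
       - DD u e k * ?U (m - 1) * G u e (r + 1)" unfolding p main sa ..
    also have "\<dots> = ?U (m + 1) * G u e (r + 1) + (- e k) * (\<Prod>i\<in>{1..r}. - e i) * ?U m * G (\<lambda>i. u (Suc r + i)) (\<lambda>i. e (Suc r + i)) (k - 1 - r)"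
      unfolding rec by (simp add: algebra_simps)
    finally show ?thesis unfolding cr as by (simp add: alpha_G nat_int1)
  qed
  show "charp k n a b c = chebU (n div k) (pi_ev k (xa k a) (md k b c) k) [:\<Prod>i = 1..k. b i * c i:] * alpha k (xa k a) (md k b c) (int (k + n mod k))
            - [:\<Prod>i = 1..k. b i * c i:] * chebU (n div k - 1) (pi_ev k (xa k a) (md k b c) k) [:\<Prod>i = 1..k. b i * c i:] * alpha k (xa k a) (md k b c) (int (n mod k))"
    using A1 unfolding u_def[symmetric] e_def[symmetric] m_def[symmetric] r_def[symmetric] d_def[symmetric] PPeq DDeq .
  show "charp k n a b c = chebU (n div k + 1) (pi_ev k (xa k a) (md k b c) k) [:\<Prod>i = 1..k. b i * c i:] * alpha k (xa k a) (md k b c) (int (n mod k))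
            + [:b k * c k * (\<Prod>i = 1..n mod k. b i * c i):] * chebU (n div k) (pi_ev k (xa k a) (md k b c) k) [:\<Prod>i = 1..k. b i * c i:]
              * alpha_s (n mod k + 1) k (xa k a) (md k b c) (int k - int (n mod k) - 2)"
    using A2 unfolding u_def[symmetric] e_def[symmetric] m_def[symmetric] r_def[symmetric] d_def[symmetric] PPeq DDeq .
  assume rk1: "n mod k = k - 1"
  have "alpha_s (r + 1) k u e (int k - int r - 2) = 0" using rk1 as k by (simp add: r_def)
  hence "charp k n a b c = ?U (m + 1) * alpha k u e (int (k - 1))" using A2 rk1 by (simp add: r_def)
  thus "charp k n a b c = chebU (n div k + 1) (pi_ev k (xa k a) (md k b c) k) [:\<Prod>i = 1..k. b i * c i:] * alpha k (xa k a) (md k b c) (int (k - 1))"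
    unfolding u_def[symmetric] e_def[symmetric] m_def[symmetric] r_def[symmetric] d_def[symmetric] PPeq DDeq .
qed

theorem corollary6p1:
  fixes a b c :: "nat \<Rightarrow> 'a::comm_ring_1" and k n :: nat
  assumes "k \<ge> 1" and "n \<ge> 1"
  shows "let u = xa k a; e = md k b c; p = charp k n a b c;
             m = n div k; r = n mod k;
             d = (\<Prod>i = 1..k. b i * c i);
             U = (\<lambda>j. chebU j (pi_ev k u e k) [:d:])
         in (n \<le> k \<longrightarrow> p = alpha k u e (int n))
          \<and> (n > k \<longrightarrow>
               p = U m * alpha k u e (int (k + r)) - [:d:] * U (m - 1) * alpha k u e (int r)
             \<and> p = U (m + 1) * alpha k u e (int r)
                   + [:b k * c k * (\<Prod>i = 1..r. b i * c i):] * U m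
                     * alpha_s (r + 1) k u e (int k - int r - 2)
             \<and> (r = k - 1 \<longrightarrow> p = U (m + 1) * alpha k u e (int (k - 1))))
          \<and> (\<forall>q (i :: nat \<Rightarrow> nat).
               q \<ge> 1 \<and> 1 \<le> i 1 \<and> (\<forall>j\<in>{1..<q}. i j < i (Suc j)) \<and> i q \<le> k
               \<and> ((\<forall>j\<in>{1..q}. b (i j) = 0) \<or> (\<forall>j\<in>{1..q}. c (i j) = 0))
               \<and> n > i 1
             \<longrightarrow>
               (let I = (\<lambda>j. if j = 0 then i q else if j = q + 1 then i 1 + k else i j);
                    p0 = (if r \<le> i 1 then 0
                          else (THE t. 1 \<le> t \<and> t \<le> q \<and> I t < r \<and> r \<le> I (t + 1)));
                    r' = (if r \<le> i 1 then r + k else r);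
                    mj = (\<lambda>j. if j < q then (if j < p0 then 1 else 0)
                              else (if p0 > 0 \<or> m = 0 then 0 else (-1 :: int)))
                in p = alpha k u e (int (i 1))
                       * (\<Prod>j = 1..q. (alpha_s (I j) k u e (int (I (j + 1)) - int (I j)))
                                        ^ nat (int m + mj j))
                       * alpha_s (I p0) k u e (int r' - int (I p0))))"
  unfolding Let_def
  apply (intro conjI impI allI)
  subgoal by (simp add: charp_G alpha_G nat_int1)
  subgoal by (rule part2(1)[OF assms(1)]) assumption
  subgoal by (rule part2(2)[OF assms(1)]) assumption
  subgoal by (rule part2(3)[OF assms(1)]) assumption+
  subgoal by (rule part3_core[OF assms(1) _ _ _ _ _ _ refl refl refl refl refl refl]) auto
  done


end
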